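(* Let $R$ be a Lucas rod set $[1^s,2^t]$ or $[\bar1^s,2^t]$. For each of the following pairs of positive integers $a<b$ there exist a finite rod set $Q$ and a rod set $S$ of shape $\langle a,b\rangle$ with $R\xrightarrow{Q}S$, and $S$ is unique up to equivalence: (1) $b=a+1$, for any $a\ge1$; (2) $b=a+2$, when $s=1$ or $a$ is even; (3) $a=kd$, $b=(k+1)d$, for any integers $d\ge3$ and $k\ge1$.
   Context: A rod is a triple $(r,c,\varepsilon)$ with $r$ a positive integer (length), $c$ a tag (color), $\varepsilon\in\{\pm1\}$ (sign); antirods have sign $-1$. A rod set is a set of rods with finitely many of each length. A Lucas rod set is $[1^s,2^t]$ ($s$ positive rods of length 1, $t$ positive rods of length 2) or $[\bar1^s,2^t]$ ($s$ antirods of length 1, $t$ positive rods of length 2), with $s,t$ relatively prime positive integers. $C(n,R)$ = (number of positive rods of length $n$) $-$ (number of antirods of length $n$); $R\equiv S$ means $C(n,R)=C(n,S)$ for all $n>0$. A rod set is finite if its reduced equivalent (no rod and antirod of the same length) is finite. The shape of $S$ is the set of lengths $n$ with $C(n,S)\ne0$; shape $\langle a,b\rangle$ means this set is $\{a,b\}$. Unions are disjoint unions; $\overline{Q}$ reverses all signs; $QR$ has one rod per pair $(q,r)\in Q\times R$ of length $\operatorname{len}q+\operatorname{len}r$ and sign $\operatorname{sign}q\operatorname{sign}r$. $R\xrightarrow{Q}S$ means $S\equiv R\cup\overline{Q}\cup QR$. *)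

theory Defs
  imports Main
begin

text \<open>A rod set is represented up to relabelling of colours by its counting data:
  the pair (p, m) where p n is the number of positive rods of length n and
  m n the number of antirods of length n.  Lengths are positive, so there are
  no rods of length 0.\<close>

type_synonym rodset = "(nat \<Rightarrow> nat) \<times> (nat \<Rightarrow> nat)"

definition pos :: "rodset \<Rightarrow> nat \<Rightarrow> nat" where "pos R = fst R"
definition neg :: "rodset \<Rightarrow> nat \<Rightarrow> nat" where "neg R = snd R"

definition is_rodset :: "rodset \<Rightarrow> bool" where
  "is_rodset R \<longleftrightarrow> pos R 0 = 0 \<and> neg R 0 = 0"

definition C :: "nat \<Rightarrow> rodset \<Rightarrow> int" where
  "C n R = int (pos R n) - int (neg R n)"

definition rod_equiv :: "rodset \<Rightarrow> rodset \<Rightarrow> bool" where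
  "rod_equiv R S \<longleftrightarrow> (\<forall>n>0. C n R = C n S)"

definition reduce :: "rodset \<Rightarrow> rodset" where
  "reduce R = ((\<lambda>n. pos R n - min (pos R n) (neg R n)),
               (\<lambda>n. neg R n - min (pos R n) (neg R n)))"

definition finite_rodset :: "rodset \<Rightarrow> bool" where
  "finite_rodset R \<longleftrightarrow> finite {n. pos (reduce R) n \<noteq> 0 \<or> neg (reduce R) n \<noteq> 0}"

definition shape :: "rodset \<Rightarrow> nat set" where
  "shape S = {n. n > 0 \<and> C n S \<noteq> 0}"

definition rod_union :: "rodset \<Rightarrow> rodset \<Rightarrow> rodset" where
  "rod_union Q R = ((\<lambda>n. pos Q n + pos R n), (\<lambda>n. neg Q n + neg R n))"

definition rod_bar :: "rodset \<Rightarrow> rodset" where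
  "rod_bar Q = (neg Q, pos Q)"

text \<open>Product: one rod per pair, length = sum of lengths, sign = product of signs.
  (Rods have positive length, so summing over i \<le> n covers all pairs.)\<close>
definition rod_prod :: "rodset \<Rightarrow> rodset \<Rightarrow> rodset" where
  "rod_prod Q R =
     ((\<lambda>n. \<Sum>i\<le>n. pos Q i * pos R (n - i) + neg Q i * neg R (n - i)),
      (\<lambda>n. \<Sum>i\<le>n. pos Q i * neg R (n - i) + neg Q i * pos R (n - i)))"

definition rod_step :: "rodset \<Rightarrow> rodset \<Rightarrow> rodset \<Rightarrow> bool" where
  "rod_step R Q S \<longleftrightarrow> rod_equiv S (rod_union (rod_union R (rod_bar Q)) (rod_prod Q R))"

definition lucas_pos :: "nat \<Rightarrow> nat \<Rightarrow> rodset" where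
  "lucas_pos s t = ((\<lambda>n. if n = 1 then s else if n = 2 then t else 0), (\<lambda>n. 0))"

definition lucas_neg :: "nat \<Rightarrow> nat \<Rightarrow> rodset" where
  "lucas_neg s t = ((\<lambda>n. if n = 2 then t else 0), (\<lambda>n. if n = 1 then s else 0))"

definition is_lucas :: "rodset \<Rightarrow> nat \<Rightarrow> nat \<Rightarrow> bool" where
  "is_lucas R s t \<longleftrightarrow> s > 0 \<and> t > 0 \<and> coprime s t \<and>
     (R = lucas_pos s t \<or> R = lucas_neg s t)"

end

theory Submission
  imports Defs
begin



fun U :: "int \<Rightarrow> int \<Rightarrow> nat \<Rightarrow> int" where
  "U p q 0 = 0"
| "U p q (Suc 0) = 1"
| "U p q (Suc (Suc n)) = p * U p q (Suc n) + q * U p q n"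

definition V :: "int \<Rightarrow> int \<Rightarrow> nat \<Rightarrow> nat \<Rightarrow> int" where
  "V p q a n = (if a \<le> n then U p q (n - a) else 0)"

lemma V_rec: "V p q a (Suc (Suc k)) = p * V p q a (Suc k) + q * V p q a k + (if Suc k = a then 1 else 0)"
proof (cases "a \<le> k")
  case True
  then have "Suc (Suc k) - a = Suc (Suc (k - a))" "Suc k - a = Suc (k - a)" by auto
  with True show ?thesis by (simp add: V_def)
next
  case False
  then show ?thesis by (auto simp: V_def)
qed

lemma hom_zero:
  assumes "z 0 = 0" "z (Suc 0) = 0" "\<And>k. z (Suc (Suc k)) = p * z (Suc k) + q * z k"
  shows "z n = (0::int)"
proof -
  have "z n = 0 \<and> z (Suc n) = 0" by (induction n) (auto simp: assms)
  then show ?thesis by simp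
qed

lemma sol_form:
  assumes w0: "w 0 = 0" and w1: "w (Suc 0) = 1"
    and wr: "\<And>k. w (Suc (Suc k)) = p * w (Suc k) + q * w k - g (Suc k)"
    and a1: "1 \<le> a" and ab: "a < b" and g0: "\<And>n. 0 < n \<Longrightarrow> n \<noteq> a \<Longrightarrow> n \<noteq> b \<Longrightarrow> g n = (0::int)"
  shows "w n = U p q n - g a * V p q a n - g b * V p q b n"
proof -
  define z where "z n = w n - (U p q n - g a * V p q a n - g b * V p q b n)" for n
  have "z n = 0"
  proof (rule hom_zero[where p=p and q=q])
    show "z 0 = 0" using w0 a1 ab by (simp add: z_def V_def)
    show "z (Suc 0) = 0" using w1 a1 ab by (auto simp: z_def V_def)
    fix k
    have g: "g (Suc k) = (if Suc k = a then g a else 0) + (if Suc k = b then g b else 0)"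
      using ab g0[of "Suc k"] by auto
    show "z (Suc (Suc k)) = p * z (Suc k) + q * z k"
      unfolding z_def wr V_rec g by (simp add: algebra_simps)
  qed
  then show ?thesis by (simp add: z_def)
qed

lemma tail_zero:
  assumes q: "q \<noteq> 0" and rec: "\<And>k. b \<le> k \<Longrightarrow> w (Suc (Suc k)) = p * w (Suc k) + q * w k"
    and fin: "\<And>n. N \<le> n \<Longrightarrow> w n = (0::int)" and bn: "b \<le> n"
  shows "w n = 0"
proof (rule ccontr)
  assume nz: "w n \<noteq> 0"
  let ?A = "{n. b \<le> n \<and> w n \<noteq> 0}"
  have sub: "?A \<subseteq> {..<N}" using fin by (auto simp: not_less[symmetric])
  have finA: "finite ?A" using finite_subset[OF sub] by simp
  have ne: "n \<in> ?A" using nz bn by simp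
  define m where "m = Max ?A"
  have mA: "m \<in> ?A" using finA ne Max_in m_def by auto
  have "Suc m \<notin> ?A" using finA m_def Max_ge by fastforce
  then have z1: "w (Suc m) = 0" using mA by auto
  have "Suc (Suc m) \<notin> ?A" using finA m_def Max_ge by fastforce
  then have z2: "w (Suc (Suc m)) = 0" using mA by auto
  have "q * w m = 0" using rec[of m] mA z1 z2 by simp
  then show False using q mA by simp
qed

lemma U_add: "U p q (Suc (m + n)) = U p q (Suc m) * U p q (Suc n) + q * U p q m * U p q n"
proof (induction p q m arbitrary: n rule: U.induct)
  case (1 p q)
  then show ?case by simp
next
  case (2 p q)
  then show ?case by simp
next
  case (3 p q m)
  have "U p q (Suc (Suc (Suc m) + n)) = p * U p q (Suc (Suc m + n)) + q * U p q (Suc (m + n))" by simp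
  also have "\<dots> = p * (U p q (Suc (Suc m)) * U p q (Suc n) + q * U p q (Suc m) * U p q n)
      + q * (U p q (Suc m) * U p q (Suc n) + q * U p q m * U p q n)"
    by (simp only: 3)
  also have "\<dots> = (p * U p q (Suc (Suc m)) + q * U p q (Suc m)) * U p q (Suc n)
      + q * (p * U p q (Suc m) + q * U p q m) * U p q n"
    by (simp add: algebra_simps del: U.simps)
  also have "\<dots> = U p q (Suc (Suc (Suc m))) * U p q (Suc n) + q * U p q (Suc (Suc m)) * U p q n"
    by (simp only: U.simps)
  finally show ?case .
qed

lemma U_dvd: "U p q d dvd U p q (j * d)"
proof (induction j)
  case 0
  then show ?case by simp
next
  case (Suc j)
  show ?case
  proof (cases d)
    case 0
    then show ?thesis by simp
  next
    case (Suc d')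
    have e: "Suc j * d = Suc (j * d + d')" using Suc by simp
    have "U p q (Suc j * d) = U p q (Suc (j * d + d'))" by (simp only: e)
    also have "\<dots> = U p q (Suc (j * d)) * U p q (Suc d') + q * U p q (j * d) * U p q d'"
      by (rule U_add)
    finally have "U p q (Suc j * d) = U p q (Suc (j * d)) * U p q d + q * U p q (j * d) * U p q d'"
      using Suc by simp
    moreover have "U p q d dvd U p q (Suc (j * d)) * U p q d + q * U p q (j * d) * U p q d'"
      using Suc.IH by (intro dvd_add) auto
    ultimately show ?thesis by simp
  qed
qed

lemma U_even: "p dvd U p q (2 * k)"
proof (induction k)
  case 0
  then show ?case by simp
next
  case (Suc k)
  have "U p q (2 * Suc k) = p * U p q (Suc (2 * k)) + q * U p q (2 * k)"
    by (simp add: mult_2)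
  then show ?case using Suc.IH by simp
qed

lemma U_D: "U p q (Suc (m + a)) * U p q m - U p q (m + a) * U p q (Suc m) = - ((-q) ^ m * U p q a)"
proof (induction m)
  case 0
  then show ?case by simp
next
  case (Suc m)
  have h: "U p q (m + a) * U p q (Suc m) - U p q (Suc (m + a)) * U p q m = (-q) ^ m * U p q a"
    using Suc.IH by (metis minus_diff_eq minus_minus)
  have "U p q (Suc (Suc m + a)) * U p q (Suc m) - U p q (Suc m + a) * U p q (Suc (Suc m))
     = q * (U p q (m + a) * U p q (Suc m) - U p q (Suc (m + a)) * U p q m)"
    by (simp add: algebra_simps)
  also have "\<dots> = - ((-q) ^ Suc m * U p q a)" unfolding h by simp
  finally show ?case .
qed

lemma U_pos: assumes "0 < p" "0 \<le> q" shows "0 \<le> U p q n \<and> 1 \<le> U p q (Suc n)"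
proof (induction n)
  case 0
  then show ?case by simp
next
  case (Suc n)
  then have "p * U p q (Suc n) \<ge> 1" using assms
  proof -
    have "1 * 1 \<le> p * U p q (Suc n)" using assms Suc by (intro mult_mono) auto
    then show ?thesis by simp
  qed
  moreover have "q * U p q n \<ge> 0" using Suc assms by simp
  ultimately show ?case using Suc by simp
qed

lemma U_neg: "U (-p) q n = (-1) ^ Suc n * U p q n"
  by (induction p q n rule: U.induct) (simp_all add: algebra_simps)

lemma U_nz: assumes "0 < s" "0 < q" "p = s \<or> p = - s" "0 < n" shows "U p q n \<noteq> 0"
proof -
  obtain n' where n: "n = Suc n'" using assms(4) by (cases n) auto
  have "1 \<le> U s q n" using U_pos[of s q n'] assms n by simp
  then show ?thesis using assms(3) U_neg[of s q n] by auto
qed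



lemma C_union: "C n (rod_union Q R) = C n Q + C n R"
  by (simp add: C_def rod_union_def pos_def neg_def)

lemma C_bar: "C n (rod_bar Q) = - C n Q"
  by (simp add: C_def rod_bar_def pos_def neg_def)

lemma C_prod: "C n (rod_prod Q R) = (\<Sum>i\<le>n. C i Q * C (n - i) R)"
  by (simp add: C_def rod_prod_def pos_def neg_def of_nat_sum sum_subtractf[symmetric] algebra_simps)

definition r :: "int \<Rightarrow> int \<Rightarrow> nat \<Rightarrow> int" where
  "r p q n = (if n = 1 then p else if n = 2 then q else 0)"

lemma finite_iff: "finite_rodset Q \<longleftrightarrow> finite {n. C n Q \<noteq> 0}"
proof -
  have "{n. pos (reduce Q) n \<noteq> 0 \<or> neg (reduce Q) n \<noteq> 0} = {n. C n Q \<noteq> 0}"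
    by (auto simp: reduce_def C_def pos_def neg_def)
  then show ?thesis by (simp add: finite_rodset_def)
qed

lemma sum_r:
  assumes "c 0 = 0"
  shows "(\<Sum>i\<le>Suc k. c i * r p q (Suc k - i)) = p * c k + (if k = 0 then 0 else q * c (k - 1))"
proof -
  have "(\<Sum>i\<le>Suc k. c i * r p q (Suc k - i))
      = (\<Sum>i\<le>Suc k. (if i = k then p * c k else 0) + (if i = k - 1 \<and> k \<noteq> 0 then q * c (k - 1) else 0))"
  proof (rule sum.cong)
    fix i assume "i \<in> {..Suc k}"
    then have i: "i \<le> Suc k" by simp
    consider "i = k" | "i = k - 1 \<and> k \<noteq> 0" | "i = Suc k" | "i \<noteq> k \<and> i \<noteq> Suc k \<and> \<not> (i = k - 1 \<and> k \<noteq> 0)" by blast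
    then show "c i * r p q (Suc k - i) = (if i = k then p * c k else 0) + (if i = k - 1 \<and> k \<noteq> 0 then q * c (k - 1) else 0)"
    proof cases
      case 1
      then have "\<not> (i = k - 1 \<and> k \<noteq> 0)" by arith
      then have h: "(if i = k - 1 \<and> k \<noteq> 0 then q * c (k - 1) else 0) = 0" by (rule if_not_P)
      show ?thesis unfolding h using 1 by (simp add: r_def)
    next
      case 2
      then have e: "Suc k - i = 2" by simp
      from 2 have "i \<noteq> k" by arith
      then have h: "(if i = k then p * c k else 0) = 0" by (rule if_not_P)
      from 2 have h2: "(if i = k - 1 \<and> k \<noteq> 0 then q * c (k - 1) else 0) = q * c i" by simp
      show ?thesis unfolding h h2 e by (simp add: r_def)
    next
      case 3
      then have "\<not> (i = k - 1 \<and> k \<noteq> 0)" by arith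
      then have h: "(if i = k - 1 \<and> k \<noteq> 0 then q * c (k - 1) else 0) = 0" by (rule if_not_P)
      show ?thesis unfolding h using 3 by (simp add: r_def)
    next
      case 4
      then have "Suc k - i \<noteq> 1" "Suc k - i \<noteq> 2" using i by auto
      then have "r p q (Suc k - i) = 0" by (simp add: r_def)
      moreover have "(if i = k then p * c k else 0) = 0" using 4 by (intro if_not_P) blast
      moreover have "(if i = k - 1 \<and> k \<noteq> 0 then q * c (k - 1) else 0) = 0" using 4 by (intro if_not_P) blast
      ultimately show ?thesis by simp
    qed
  qed simp
  also have "\<dots> = p * c k + (if k = 0 then 0 else q * c (k - 1))"
  proof (cases k)
    case 0
    then show ?thesis by (simp add: sum.distrib)
  next
    case (Suc j)
    have "(\<Sum>i\<le>Suc k. (if i = k - 1 \<and> k \<noteq> 0 then q * c (k - 1) else 0)) = (\<Sum>i\<le>Suc k. (if i = j then q * c j else 0))"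
      using Suc by (intro sum.cong) auto
    also have "\<dots> = q * c j" using Suc by simp
    finally show ?thesis using Suc by (simp add: sum.distrib)
  qed
  finally show ?thesis .
qed

lemma step_C:
  assumes RC: "\<And>n. C n R = r p q n" and Q0: "C 0 Q = 0"
  shows "C (Suc k) (rod_union (rod_union R (rod_bar Q)) (rod_prod Q R))
    = p * (if Suc k = 1 then 1 else C k Q) + q * (if k = 0 then 0 else if k = 1 then 1 else C (k - 1) Q)
      - C (Suc k) Q"
proof -
  have "C (Suc k) (rod_union (rod_union R (rod_bar Q)) (rod_prod Q R))
     = r p q (Suc k) - C (Suc k) Q + (\<Sum>i\<le>Suc k. C i Q * r p q (Suc k - i))"
    by (simp add: C_union C_bar C_prod RC)
  also have "\<dots> = r p q (Suc k) - C (Suc k) Q + (p * C k Q + (if k = 0 then 0 else q * C (k - 1) Q))"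
    using sum_r[where c="\<lambda>i. C i Q" and k=k and p=p and q=q] Q0 by simp
  finally show ?thesis using Q0 by (auto simp: r_def)
qed



lemma uniq:
  assumes RC: "\<And>n. C n R = r p q n" and q0: "q \<noteq> 0"
    and a1: "1 \<le> a" and ab: "a < b"
    and Qr: "is_rodset Q" and Qf: "finite_rodset Q" and Ssh: "shape S = {a, b}" and st: "rod_step R Q S"
  shows "C a S * U p q (b - a) = U p q b \<and> C b S = U p q (Suc b) - C a S * U p q (Suc (b - a))"
proof -
  have Q0: "C 0 Q = 0" using Qr by (simp add: is_rodset_def C_def)
  define w where "w n = (if n = 0 then 0 else if n = 1 then 1 else C (n - 1) Q)" for n
  define g where "g n = C n S" for n
  have g0: "g n = 0" if "0 < n" "n \<noteq> a" "n \<noteq> b" for n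
  proof -
    have "n \<notin> shape S" using Ssh that by simp
    then show ?thesis using that by (simp add: shape_def g_def)
  qed
  have wr: "w (Suc (Suc k)) = p * w (Suc k) + q * w k - g (Suc k)" for k
  proof -
    have "g (Suc k) = C (Suc k) (rod_union (rod_union R (rod_bar Q)) (rod_prod Q R))"
      using st by (simp add: rod_step_def rod_equiv_def g_def)
    also have "\<dots> = p * (if Suc k = 1 then 1 else C k Q) + q * (if k = 0 then 0 else if k = 1 then 1 else C (k - 1) Q)
      - C (Suc k) Q" by (rule step_C[OF RC Q0])
    finally show ?thesis by (simp add: w_def)
  qed
  have wf: "w n = U p q n - g a * V p q a n - g b * V p q b n" for n
  proof -
    have w0: "w 0 = 0" by (simp add: w_def)
    have w1: "w (Suc 0) = 1" by (simp add: w_def)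
    show ?thesis by (rule sol_form[OF w0 w1 wr a1 ab g0])
  qed
  have "finite {n. C n Q \<noteq> 0}" using Qf finite_iff by blast
  then have "\<exists>M. \<forall>n\<in>{n. C n Q \<noteq> 0}. n \<le> M" by (simp only: finite_nat_set_iff_bounded_le)
  then obtain M where M: "\<forall>n\<in>{n. C n Q \<noteq> 0}. n \<le> M" by blast
  have wN: "w n = 0" if "Suc (Suc M) \<le> n" for n
  proof -
    have "C (n - 1) Q = 0"
    proof (rule ccontr)
      assume "C (n - 1) Q \<noteq> 0"
      then have "n - 1 \<le> M" using M by blast
      with that show False by simp
    qed
    then show ?thesis using that by (simp add: w_def)
  qed
  have rec: "w (Suc (Suc k)) = p * w (Suc k) + q * w k" if "b \<le> k" for k
    using wr[of k] g0[of "Suc k"] that ab by simp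
  have z: "w n = 0" if "b \<le> n" for n
    by (rule tail_zero[where q=q and b=b and w=w and p=p and N="Suc (Suc M)", OF q0 rec wN that])
  have e1: "0 = U p q b - g a * U p q (b - a)"
    using z[of b] wf[of b] ab by (simp add: V_def)
  have e2: "Suc b - a = Suc (b - a)" using ab by simp
  have e3: "0 = U p q (Suc b) - g a * U p q (Suc (b - a)) - g b"
    using z[of "Suc b"] wf[of "Suc b"] ab by (simp add: V_def e2)
  show ?thesis using e1 e3 by (simp add: g_def)
qed

theorem mainTheorem18:
  fixes R :: rodset and s t a b :: nat
  assumes "is_lucas R s t"
    and "0 < a" and "a < b"
    and "b = a + 1
         \<or> (b = a + 2 \<and> (s = 1 \<or> even a))
         \<or> (\<exists>d k. d \<ge> 3 \<and> k \<ge> 1 \<and> a = k * d \<and> b = (k + 1) * d)"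
  shows "\<exists>Q S. is_rodset Q \<and> finite_rodset Q \<and> is_rodset S \<and> shape S = {a, b}
              \<and> rod_step R Q S
              \<and> (\<forall>Q' S'. is_rodset Q' \<and> finite_rodset Q' \<and> is_rodset S'
                        \<and> shape S' = {a, b} \<and> rod_step R Q' S' \<longrightarrow> rod_equiv S' S)"
proof -
  have s0: "0 < s" and t0: "0 < t" using assms(1) by (auto simp: is_lucas_def)
  define q where "q = int t"
  obtain p where hp: "p = int s \<or> p = - int s" and RC: "\<And>n. C n R = r p q n"
  proof (cases "R = lucas_pos s t")
    case True
    show ?thesis
      by (rule that[of "int s"]) (auto simp: True C_def lucas_pos_def pos_def neg_def r_def q_def)
  next
    case False
    then have "R = lucas_neg s t" using assms(1) by (auto simp: is_lucas_def)
    then show ?thesis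
      by (intro that[of "- int s"]) (auto simp: C_def lucas_neg_def pos_def neg_def r_def q_def)
  qed
  have q0: "q \<noteq> 0" and qpos: "0 < q" using t0 by (auto simp: q_def)
  have Unz: "U p q n \<noteq> 0" if "0 < n" for n
    using U_nz[of "int s" q p n] s0 qpos hp that by simp
  define m where "m = b - a"
  have m0: "0 < m" and bm: "b = m + a" using assms(3) by (auto simp: m_def)
  have dv: "U p q m dvd U p q b"
    using assms(4)
  proof (elim disjE conjE exE)
    assume "b = a + 1"
    then have "m = 1" by (simp add: m_def)
    then show ?thesis by simp
  next
    assume b2: "b = a + 2" and "s = 1"
    then have "m = 2" by (simp add: m_def)
    then have "U p q m = p" by (simp add: numeral_2_eq_2)
    moreover have p1: "p dvd 1" using hp \<open>s = 1\<close> by auto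
    ultimately show ?thesis by (metis one_dvd dvd_trans)
  next
    assume b2: "b = a + 2" and "even a"
    then have "m = 2" by (simp add: m_def)
    then have "U p q m = p" by (simp add: numeral_2_eq_2)
    moreover obtain k where "b = 2 * k" using b2 \<open>even a\<close> by (metis evenE even_add even_numeral)
    ultimately show ?thesis using U_even[of p q k] by simp
  next
    fix d k
    assume "a = k * d" "b = (k + 1) * d"
    then have "m = d" by (simp add: m_def)
    then show ?thesis using U_dvd[of p q d "k + 1"] \<open>b = (k + 1) * d\<close> by simp
  qed
  then obtain \<alpha> where h\<alpha>: "U p q b = U p q m * \<alpha>" by (elim dvdE)
  define \<beta> where "\<beta> = U p q (Suc b) - \<alpha> * U p q (Suc m)"
  have anz: "\<alpha> \<noteq> 0" using h\<alpha> Unz[of b] assms(3) by auto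
  have "\<beta> * U p q m = U p q (Suc (m + a)) * U p q m - U p q (m + a) * U p q (Suc m)"
    using h\<alpha> bm by (simp add: \<beta>_def algebra_simps)
  also have "\<dots> = - ((-q) ^ m * U p q a)" by (rule U_D)
  finally have "\<beta> * U p q m \<noteq> 0" using q0 Unz[of a] assms(2) by simp
  then have bnz: "\<beta> \<noteq> 0" by auto
  define g where "g n = (if n = a then \<alpha> else if n = b then \<beta> else 0)" for n
  define w where "w n = U p q n - \<alpha> * V p q a n - \<beta> * V p q b n" for n
  have wr: "w (Suc (Suc k)) = p * w (Suc k) + q * w k - g (Suc k)" for k
    unfolding w_def g_def V_rec using assms(3) by (auto simp: algebra_simps)
  have wb: "w b = 0" using h\<alpha> assms(3) by (simp add: w_def V_def m_def algebra_simps)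
  have e2: "Suc b - a = Suc m" using assms(3) by (simp add: m_def)
  have wb1: "w (Suc b) = 0" using assms(3) by (simp add: w_def V_def e2 \<beta>_def)
  have wz: "w n = 0" if "b \<le> n" for n
  proof -
    have "w (b + j) = 0 \<and> w (b + Suc j) = 0" for j
    proof (induction j)
      case 0
      then show ?case using wb wb1 by simp
    next
      case (Suc j)
      have "w (Suc (Suc (b + j))) = p * w (Suc (b + j)) + q * w (b + j) - g (Suc (b + j))" by (rule wr)
      moreover have "g (Suc (b + j)) = 0" using assms(3) by (simp add: g_def)
      ultimately show ?case using Suc by simp
    qed
    from this[of "n - b"] that show ?thesis by simp
  qed
  define c where "c n = (if n = 0 then 0 else w (Suc n))" for n
  define Q :: rodset where "Q = ((\<lambda>n. nat (c n)), (\<lambda>n. nat (- c n)))"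
  define S :: rodset where "S = ((\<lambda>n. nat (g n)), (\<lambda>n. nat (- g n)))"
  have CQ: "C n Q = c n" for n by (simp add: Q_def C_def pos_def neg_def)
  have CS: "C n S = g n" for n by (simp add: S_def C_def pos_def neg_def)
  have Qr: "is_rodset Q" by (simp add: is_rodset_def Q_def pos_def neg_def c_def)
  have Sr: "is_rodset S" using assms(2,3) by (simp add: is_rodset_def S_def pos_def neg_def g_def)
  have Qf: "finite_rodset Q"
  proof -
    have "{n. C n Q \<noteq> 0} \<subseteq> {..b}"
    proof
      fix x assume "x \<in> {n. C n Q \<noteq> 0}"
      then have x: "c x \<noteq> 0" by (simp add: CQ)
      show "x \<in> {..b}"
      proof (rule ccontr)
        assume "x \<notin> {..b}"
        then have "b \<le> Suc x" by simp
        then have "w (Suc x) = 0" by (rule wz)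
        then show False using x by (auto simp: c_def split: if_splits)
      qed
    qed
    then show ?thesis using finite_iff finite_subset by blast
  qed
  have Ssh: "shape S = {a, b}" using anz bnz assms(2,3) by (auto simp: shape_def CS g_def)
  have w0: "w 0 = 0" using assms(2,3) by (simp add: w_def V_def)
  have w1: "w 1 = 1" using assms(2,3) by (simp add: w_def V_def)
  have st: "rod_step R Q S"
    unfolding rod_step_def rod_equiv_def
  proof (intro allI impI)
    fix n :: nat assume "0 < n"
    then obtain k where n: "n = Suc k" by (cases n) auto
    have Q0: "C 0 Q = 0" by (simp add: CQ c_def)
    have "C (Suc k) (rod_union (rod_union R (rod_bar Q)) (rod_prod Q R))
      = p * (if Suc k = 1 then 1 else C k Q) + q * (if k = 0 then 0 else if k = 1 then 1 else C (k - 1) Q)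
      - C (Suc k) Q" by (rule step_C[OF RC Q0])
    also have "\<dots> = p * w (Suc k) + q * w k - w (Suc (Suc k))"
      using w0 w1 by (cases k) (auto simp: CQ c_def)
    also have "\<dots> = g (Suc k)" using wr[of k] by simp
    finally show "C n S = C n (rod_union (rod_union R (rod_bar Q)) (rod_prod Q R))"
      using n CS by simp
  qed
  show ?thesis
  proof (intro exI conjI allI impI)
    show "is_rodset Q" "finite_rodset Q" "is_rodset S" "shape S = {a, b}" "rod_step R Q S"
      using Qr Qf Sr Ssh st by auto
    fix Q' S'
    assume H: "is_rodset Q' \<and> finite_rodset Q' \<and> is_rodset S' \<and> shape S' = {a, b} \<and> rod_step R Q' S'"
    have u: "C a S' * U p q (b - a) = U p q b \<and> C b S' = U p q (Suc b) - C a S' * U p q (Suc (b - a))"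
      apply (rule uniq[OF RC q0 _ assms(3)])
      using H assms(2) by auto
    have "C a S' = \<alpha>" using u h\<alpha> Unz[OF m0] by (simp add: m_def mult.commute)
    moreover then have "C b S' = \<beta>" using u by (simp add: \<beta>_def m_def)
    moreover have "C n S' = 0" if "0 < n" "n \<noteq> a" "n \<noteq> b" for n
    proof -
      have "n \<notin> shape S'" using H that by simp
      then show ?thesis using that by (simp add: shape_def)
    qed
    ultimately show "rod_equiv S' S" by (auto simp: rod_equiv_def CS g_def)
  qed
qed

end
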